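(* Let $\sum_{i=0}^\infty a_it^i\in\mathbb{C}_3[[t]]$ be a power series with integral coefficients ($v(a_i)\ge 0$ for all $i$), and let $f(t)=\sum_{i=0}^\infty\frac{a_i}{i+1}t^{i+1}$. If $v(a_0)=0$, $v(a_1)=0$, or $v(a_2)=0$, then $\mathrm{New}_{1/3}(f)\subset[1,3]$.
   Context: $\mathbb{C}_3$ is the completion of $\overline{\mathbb{Q}_3}$ with valuation $v$, $v(3)=1$, $v(0)=\infty$. For a positive rational $m$ and a power series $F(t)=\sum_{u\ge0}c_ut^u$, the Newton polygon $\mathrm{New}_m(F)\subset\mathbb{R}$ is the convex hull of the set of $u\in\mathbb{Z}_{\ge0}$ for which there exists $w\in\mathbb{Q}$ with $w\ge m$ such that $v(c_u)+wu=v(c_{u'})+wu'$ for some $u'\ne u$ and $v(c_u)+wu\le v(c_{u''})+wu''$ for all $u''\in\mathbb{Z}_{\ge0}$. *)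

theory Defs
  imports "HOL-Analysis.Analysis" "HOL-Library.Extended_Real"
begin

text \<open>A valuation v on a field of characteristic 0, with values in the rationals
  (plus infinity for 0), multiplicative, ultrametric and normalised by v(3) = 1.
  The completed algebraic closure C_3 of Q_3 with its valuation is an instance;
  these axioms force v to agree with the 3-adic valuation on Q.\<close>
definition C3_valuation :: "('a::field_char_0 \<Rightarrow> ereal) \<Rightarrow> bool" where
  "C3_valuation v \<longleftrightarrow>
     (\<forall>x. v x = \<infinity> \<longleftrightarrow> x = 0) \<and>
     (\<forall>x. x \<noteq> 0 \<longrightarrow> (\<exists>q::rat. v x = ereal (of_rat q))) \<and>
     (\<forall>x y. v (x * y) = v x + v y) \<and>
     (\<forall>x y. min (v x) (v y) \<le> v (x + y)) \<and>
     v 3 = 1"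

definition newton_polygon ::
  "('a \<Rightarrow> ereal) \<Rightarrow> rat \<Rightarrow> (nat \<Rightarrow> 'a) \<Rightarrow> real set" where
  "newton_polygon v m c = convex hull (real ` {u::nat.
      \<exists>w::rat. w \<ge> m \<and>
        (\<exists>u'. u' \<noteq> u \<and>
           v (c u) + ereal (of_rat w * real u) = v (c u') + ereal (of_rat w * real u')) \<and>
        (\<forall>u''. v (c u) + ereal (of_rat w * real u) \<le> v (c u'') + ereal (of_rat w * real u''))})"

end

theory Submission imports Defs begin

context
  fixes v :: "'a::field_char_0 \<Rightarrow> ereal"
  assumes V: "C3_valuation v"
begin

lemma v_inf: "v x = \<infinity> \<longleftrightarrow> x = 0" using V unfolding C3_valuation_def by blast
lemma v_fin: "x \<noteq> 0 \<Longrightarrow> \<exists>q::rat. v x = ereal (of_rat q)" using V unfolding C3_valuation_def by blast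
lemma v_mult: "v (x * y) = v x + v y" using V unfolding C3_valuation_def by blast
lemma v_add: "min (v x) (v y) \<le> v (x + y)" using V unfolding C3_valuation_def by blast
lemma v_3: "v 3 = 1" using V unfolding C3_valuation_def by blast

lemma v_real: "x \<noteq> 0 \<Longrightarrow> \<exists>r::real. v x = ereal r"
  using v_fin by blast

lemma v_1: "v 1 = 0"
proof -
  obtain r where r: "v 1 = ereal r" using v_real[of 1] by auto
  have "v 1 = v 1 + v 1" using v_mult[of 1 1] by simp
  with r show ?thesis by (simp add: zero_ereal_def)
qed

lemma v_m1: "v (-1) = 0"
proof -
  obtain r where r: "v (-1) = ereal r" using v_real[of "-1"] by auto
  have "v 1 = v (-1) + v (-1)" using v_mult[of "-1" "-1"] by simp
  with r v_1 show ?thesis by (simp add: zero_ereal_def)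
qed

lemma v_neg: "v (-x) = v x"
  using v_mult[of "-1" x] v_m1 by simp

lemma v_nat_nonneg: "v (of_nat n) \<ge> 0"
proof (induction n)
  case 0 then show ?case using v_inf[of 0] by simp
next
  case (Suc n)
  have "min (v (of_nat n)) (v 1) \<le> v (of_nat n + 1)" by (rule v_add)
  then show ?case using Suc v_1 by (simp add: add.commute)
qed

lemma v_strict: "v x < v y \<Longrightarrow> v (x + y) = v x"
proof -
  assume h: "v x < v y"
  have a: "min (v x) (v y) \<le> v (x + y)" by (rule v_add)
  have b: "min (v (x+y)) (v (-y)) \<le> v ((x + y) + (-y))" by (rule v_add)
  show ?thesis using a b h v_neg[of y] by (auto simp: min_def split: if_splits)
qed

lemma v_2: "v 2 = 0"
proof (rule ccontr)
  assume "v 2 \<noteq> 0"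
  moreover have "v 2 \<ge> 0" using v_nat_nonneg[of 2] by simp
  ultimately have g: "v 2 > 0" by simp
  have "min (v 3) (v (-2)) \<le> v (3 + (-2))" by (rule v_add)
  then have "min 1 (v 2) \<le> v 1" using v_3 v_neg[of 2] by simp
  with g v_1 show False by (auto simp: min_def split: if_splits)
qed

lemma v_nat: "n > 0 \<Longrightarrow> \<exists>k. v (of_nat n) = ereal (real k) \<and> 3 ^ k dvd n"
proof (induction n rule: less_induct)
  case (less n)
  show ?case
  proof (cases "3 dvd n")
    case True
    then obtain m where m: "n = 3 * m" by auto
    with less.prems have "m > 0" "m < n" by auto
    with less.IH obtain k where k: "v (of_nat m) = ereal (real k)" "3 ^ k dvd m" by blast
    have "v (of_nat n) = v 3 + v (of_nat m)" using m v_mult[of 3 "of_nat m"] by simp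
    also have "\<dots> = ereal (real (Suc k))" using k v_3 by (simp add: one_ereal_def)
    finally show ?thesis using k m by (intro exI[of _ "Suc k"]) auto
  next
    case False
    define q r where "q = n div 3" and "r = n mod 3"
    have n: "n = 3 * q + r" unfolding q_def r_def by simp
    have "r = 1 \<or> r = 2" using False unfolding r_def by presburger
    then have vr: "v (of_nat r) = 0" using v_1 v_2 by auto
    have "v (of_nat (3 * q)) = v 3 + v (of_nat q)" using v_mult[of 3 "of_nat q"] by simp
    also have "\<dots> \<ge> 1" using v_3 v_nat_nonneg[of q]
      by (metis add_increasing2 order_refl)
    finally have "v (of_nat r) < v (of_nat (3 * q))" using vr less_le_trans[of 0 "1::ereal"] by simp
    then have "v (of_nat r + of_nat (3*q)) = v (of_nat r)" by (rule v_strict)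
    then have "v (of_nat n) = 0" using n vr by (simp add: add.commute)
    then show ?thesis by (intro exI[of _ 0]) (simp add: zero_ereal_def)
  qed
qed

end

lemma pow3_bound: "k \<ge> 2 \<Longrightarrow> 3 * k + 3 \<le> (3::nat) ^ k"
proof (induction k rule: dec_induct)
  case base then show ?case by simp
next
  case (step n) then show ?case by simp
qed

lemma u_bound:
  assumes "(u::nat) \<ge> 4" "3 ^ k dvd u" shows "3 * k + 3 \<le> u"
proof -
  have le: "3 ^ k \<le> u" using assms by (intro dvd_imp_le) auto
  consider "k = 0" | "k = 1" | "k \<ge> 2" by linarith
  then show ?thesis
  proof cases
    case 1 then show ?thesis using assms by simp
  next
    case 2 then have "3 dvd u" using assms by simp
    then show ?thesis using assms 2 by auto
  next
    case 3 then show ?thesis using pow3_bound[of k] le by linarith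
  qed
qed

theorem lemma7p1:
  fixes v :: "'a::field_char_0 \<Rightarrow> ereal" and a :: "nat \<Rightarrow> 'a"
  assumes "C3_valuation v"
    and "\<forall>i. v (a i) \<ge> 0"
    and "v (a 0) = 0 \<or> v (a 1) = 0 \<or> v (a 2) = 0"
  shows "newton_polygon v (1/3)
           (\<lambda>u. if u = 0 then 0 else a (u - 1) / of_nat u) \<subseteq> {1..3}"
proof -
  note V = assms(1)
  define c where "c = (\<lambda>u::nat. if u = 0 then 0 else a (u - 1) / (of_nat u :: 'a))"
  have cmul: "c u * of_nat u = a (u - 1)" if "u > 0" for u
    using that by (simp add: c_def)
  have vc: "v (c u) + v (of_nat u) = v (a (u - 1))" if "u > 0" for u
    using v_mult[OF V, of "c u" "of_nat u"] cmul[OF that] by simp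
  obtain j :: nat and d :: real where j: "j \<in> {1,2,3}" "v (a (j - 1)) = 0"
      and vj: "v (of_nat j) = ereal d" and dj: "(j = 3 \<and> d = 1) \<or> (j \<noteq> 3 \<and> d = 0)"
  proof -
    have v2: "v (of_nat 2) = 0" using v_2[OF V] by simp
    have v3: "v (of_nat 3) = 1" using v_3[OF V] by simp
    show ?thesis
      using assms(3) that[of 1 0] that[of 2 0] that[of 3 1] v_1[OF V] v2 v3
      by (auto simp: zero_ereal_def one_ereal_def)
  qed
  have jpos: "j > 0" using j by auto
  have vcj: "v (c j) = ereal (- d)"
  proof -
    have "v (c j) + ereal d = 0" using vc[OF jpos] j vj by simp
    then show ?thesis by (cases "v (c j)") (auto simp: zero_ereal_def)
  qed
  have mem: "u \<in> {1..3}" if h: "\<exists>w::rat. w \<ge> 1/3 \<and>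
        (\<exists>u'. u' \<noteq> u \<and>
           v (c u) + ereal (of_rat w * real u) = v (c u') + ereal (of_rat w * real u')) \<and>
        (\<forall>u''. v (c u) + ereal (of_rat w * real u) \<le> v (c u'') + ereal (of_rat w * real u''))"
    for u :: nat
  proof -
    obtain w :: rat where w: "w \<ge> 1/3"
      and mn: "v (c u) + ereal (of_rat w * real u) \<le> v (c j) + ereal (of_rat w * real j)"
      using h by blast
    define W where "W = (of_rat w :: real)"
    have W: "W \<ge> 1/3" unfolding W_def using w
      by (metis of_rat_divide of_rat_less_eq of_rat_numeral_eq of_rat_1)
    have mn': "v (c u) + ereal (W * real u) \<le> ereal (- d + W * real j)"
      using mn vcj unfolding W_def by simp
    have "u \<noteq> 0"
    proof
      assume "u = 0"
      then have "v (c u) = \<infinity>" using v_inf[OF V, of 0] by (simp add: c_def)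
      then show False using mn' by simp
    qed
    moreover have "\<not> u \<ge> 4"
    proof
      assume u4: "u \<ge> 4"
      then obtain k where k: "v (of_nat u) = ereal (real k)" "3 ^ k dvd u"
        using v_nat[OF V, of u] by auto
      have "v (c u) + ereal (real k) \<ge> 0" using vc[of u] u4 k assms(2) by simp
      then have "ereal (- real k + W * real u) \<le> v (c u) + ereal (W * real u)"
        by (cases "v (c u)") (auto simp: zero_ereal_def)
      then have "ereal (- real k + W * real u) \<le> ereal (- d + W * real j)"
        using mn' by (rule order_trans)
      then have ineq: "- real k + W * real u \<le> - d + W * real j" by (simp only: ereal_less_eq)
      have ub: "3 * real k + 3 \<le> real u" using u_bound[OF u4 k(2)] by linarith
      have jle: "real j \<le> 3" "real j \<le> real u" using j u4 by auto
      have "W * (real u - real j) \<ge> (1/3) * (real u - real j)"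
        using W jle by (intro mult_right_mono) auto
      then have P: "W * real u - W * real j \<ge> (real u - real j) / 3" by (simp add: algebra_simps)
      from dj show False
      proof
        assume "j = 3 \<and> d = 1" then show False using P ineq ub by simp
      next
        assume "j \<noteq> 3 \<and> d = 0"
        then have "real j \<le> 2" using j by auto
        moreover have "d = 0" using \<open>j \<noteq> 3 \<and> d = 0\<close> by simp
        ultimately show False using P ineq ub by simp
      qed
    qed
    ultimately show ?thesis by auto
  qed
  show ?thesis
    unfolding newton_polygon_def c_def[symmetric]
    apply (rule hull_minimal)
    using mem apply force
    by (rule convex_real_interval)
qed

end
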